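(* Let $M$ be a matroid of rank $k$ on a set $E$ with $\#E=n$, let $\mathfrak{S}\subseteq\mathcal{P}(E)$, and let $\mathfrak{S}'=\{E-S:S\in\mathfrak{S}\}$. Then (1) $\mathrm{ec}_{\mathfrak{S}}(M)=\mathrm{ec}_{\mathfrak{S}'}(M^* )$; and (2) for every $S\in\mathfrak{S}$, $a_{\mathfrak{S}}(S)$ computed in $M$ equals $b_{\mathfrak{S}'}(E-S)$ computed in $M^*$.
   Context: $M^*$ is the dual matroid (bases are complements of bases of $M$; it has rank $n-k$). For a matroid $N$ of rank $d$ on $E$ and $\mathfrak{T}\subseteq\mathcal{P}(E)$, regarded as a poset under inclusion with Möbius function $\mu_{\mathfrak{T}}$: $c(T)=\#T-\mathrm{rk}_N T$; $a_{\mathfrak{T}}(T)=c(T)-\sum_{U\in\mathfrak{T},U\subsetneq T}a_{\mathfrak{T}}(U)$ recursively (equivalently $a_{\mathfrak{T}}(S)=\sum_{T\in\mathfrak{T}}c(T)\mu_{\mathfrak{T}}(T,S)$); $b_{\mathfrak{T}}(T)=\sum_{S\in\mathfrak{T}}(d-\mathrm{rk}_N S)\mu_{\mathfrak{T}}(T,S)$; and $\mathrm{ec}_{\mathfrak{T}}(N)=\sum_{S\in\mathfrak{T}}(d-\mathrm{rk}_N S)a_{\mathfrak{T}}(S)=\sum_{T\in\mathfrak{T}}c(T)b_{\mathfrak{T}}(T)$. *)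

theory Defs
  imports Main
begin

definition matroid :: "'a set \<Rightarrow> ('a set \<Rightarrow> bool) \<Rightarrow> bool" where
  "matroid E indep \<longleftrightarrow>
     finite E \<and>
     (\<forall>I. indep I \<longrightarrow> I \<subseteq> E) \<and>
     indep {} \<and>
     (\<forall>I J. indep J \<and> I \<subseteq> J \<longrightarrow> indep I) \<and>
     (\<forall>I J. indep I \<and> indep J \<and> card I < card J \<longrightarrow> (\<exists>x\<in>J - I. indep (insert x I)))"

definition rk :: "('a set \<Rightarrow> bool) \<Rightarrow> 'a set \<Rightarrow> nat" where
  "rk indep X = Max (card ` {I. I \<subseteq> X \<and> indep I})"

definition basis :: "('a set \<Rightarrow> bool) \<Rightarrow> 'a set \<Rightarrow> bool" where
  "basis indep B \<longleftrightarrow> indep B \<and> (\<forall>I. indep I \<and> B \<subseteq> I \<longrightarrow> I = B)"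

text \<open>Dual matroid: its bases are the complements of the bases of M,
  so its independent sets are the subsets of such complements.\<close>
definition dual_indep :: "'a set \<Rightarrow> ('a set \<Rightarrow> bool) \<Rightarrow> 'a set \<Rightarrow> bool" where
  "dual_indep E indep I \<longleftrightarrow> (\<exists>B. basis indep B \<and> I \<subseteq> E - B)"

definition cnull :: "('a set \<Rightarrow> bool) \<Rightarrow> 'a set \<Rightarrow> int" where
  "cnull indep T = int (card T) - int (rk indep T)"

function mobius :: "'a set set \<Rightarrow> 'a set \<Rightarrow> 'a set \<Rightarrow> int" where
  "mobius P T S =
     (if T = S then 1
      else if T \<subset> S \<and> finite S
        then - (\<Sum>U\<in>{U\<in>P. T \<subseteq> U \<and> U \<subset> S}. mobius P T U)
      else 0)"
  by pat_completeness auto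
termination
  by (relation "measure (\<lambda>(P, T, S). card S)")
     (auto intro: psubset_card_mono)

declare mobius.simps [simp del]

function acoef :: "('a set \<Rightarrow> bool) \<Rightarrow> 'a set set \<Rightarrow> 'a set \<Rightarrow> int" where
  "acoef indep P T =
     (if finite T
      then cnull indep T - (\<Sum>U\<in>{U\<in>P. U \<subset> T}. acoef indep P U)
      else 0)"
  by pat_completeness auto
termination
  by (relation "measure (\<lambda>(indep, P, T). card T)")
     (auto intro: psubset_card_mono)

declare acoef.simps [simp del]

definition bcoef :: "'a set \<Rightarrow> ('a set \<Rightarrow> bool) \<Rightarrow> 'a set set \<Rightarrow> 'a set \<Rightarrow> int" where
  "bcoef E indep P T = (\<Sum>S\<in>P. (int (rk indep E) - int (rk indep S)) * mobius P T S)"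

definition ec :: "'a set \<Rightarrow> ('a set \<Rightarrow> bool) \<Rightarrow> 'a set set \<Rightarrow> int" where
  "ec E indep P = (\<Sum>S\<in>P. (int (rk indep E) - int (rk indep S)) * acoef indep P S)"

end

theory Submission imports Defs begin
lemma mat_props:
  assumes "matroid E indep"
  shows "finite E" "\<And>I. indep I \<Longrightarrow> I \<subseteq> E" "indep {}"
    "\<And>I J. indep J \<Longrightarrow> I \<subseteq> J \<Longrightarrow> indep I"
    "\<And>I J. indep I \<Longrightarrow> indep J \<Longrightarrow> card I < card J \<Longrightarrow> \<exists>x\<in>J - I. indep (insert x I)"
  using assms unfolding matroid_def by blast+

lemma fin_indeps: assumes "matroid E indep" shows "finite {I. I \<subseteq> Y \<and> indep I}"
proof -
  have "{I. I \<subseteq> Y \<and> indep I} \<subseteq> Pow E" using mat_props(2)[OF assms] by auto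
  thus ?thesis using mat_props(1)[OF assms] by (meson finite_Pow_iff finite_subset)
qed

lemma rk_ge: assumes "matroid E indep" "indep I" "I \<subseteq> Y" shows "card I \<le> rk indep Y"
  unfolding rk_def using fin_indeps[OF assms(1), of Y] assms(2,3) by (intro Max_ge) auto

lemma rk_attained: assumes "matroid E indep"
  obtains I where "I \<subseteq> Y" "indep I" "card I = rk indep Y"
proof -
  have "rk indep Y \<in> card ` {I. I \<subseteq> Y \<and> indep I}" unfolding rk_def
    using fin_indeps[OF assms, of Y] mat_props(3)[OF assms] by (intro Max_in) auto
  thus ?thesis using that by auto
qed

lemma extend_basis: assumes "matroid E indep" "indep I"
  obtains B where "basis indep B" "I \<subseteq> B"
proof -
  let ?F = "{J. indep J \<and> I \<subseteq> J}"
  have "?F \<subseteq> {J. J \<subseteq> E \<and> indep J}" using mat_props(2)[OF assms(1)] by auto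
  then have fin: "finite ?F" using fin_indeps[OF assms(1), of E] finite_subset by blast
  have "Max (card ` ?F) \<in> card ` ?F" using fin assms(2) by (intro Max_in) auto
  then obtain J where J: "J \<in> ?F" "card J = Max (card ` ?F)" by auto
  have "basis indep J" unfolding basis_def
  proof (intro conjI allI impI)
    show "indep J" using J by auto
    fix K assume K: "indep K \<and> J \<subseteq> K"
    then have "K \<in> ?F" using J by auto
    then have "card K \<le> card J" using J fin by auto
    moreover have "finite K" using K mat_props(1,2)[OF assms(1)] finite_subset by blast
    ultimately show "K = J" using K card_seteq by blast
  qed
  thus ?thesis using that J by auto
qed

lemma basis_card: assumes "matroid E indep" "basis indep B" shows "card B = rk indep E"
proof -
  have iB: "indep B" using assms(2) basis_def by auto
  have le: "card B \<le> rk indep E" using rk_ge[OF assms(1) iB] mat_props(2)[OF assms(1) iB] by auto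
  obtain I where I: "I \<subseteq> E" "indep I" "card I = rk indep E" using rk_attained[OF assms(1)] by blast
  have "\<not> card B < card I"
  proof
    assume "card B < card I"
    then obtain x where x: "x \<in> I - B" "indep (insert x B)" using mat_props(5)[OF assms(1) iB I(2)] by auto
    then have "insert x B = B" using assms(2) unfolding basis_def by auto
    with x show False by auto
  qed
  thus ?thesis using le I by auto
qed

lemma dual_rk: assumes M: "matroid E indep" and X: "X \<subseteq> E"
  shows "int (rk (dual_indep E indep) X) = int (card X) - int (rk indep E) + int (rk indep (E - X))"
proof -
  have finE: "finite E" using mat_props(1)[OF M] .
  have finX: "finite X" using finite_subset[OF X finE] .
  let ?d = "rk indep E" let ?r = "rk indep (E - X)"
  have bsub: "B \<subseteq> E" if "basis indep B" for B using that mat_props(2)[OF M] basis_def by blast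
  have key: "int (card (X - B)) = int (card X) - int ?d + int (card (B \<inter> (E - X)))"
    if B: "basis indep B" for B
  proof -
    have fB: "finite B" using bsub[OF B] finE finite_subset by blast
    have 1: "card X = card (X \<inter> B) + card (X - B)" using finX by (rule card_Int_Diff)
    have 2: "card B = card (B \<inter> X) + card (B - X)" using fB by (rule card_Int_Diff)
    have "B - X = B \<inter> (E - X)" using bsub[OF B] by auto
    moreover have "X \<inter> B = B \<inter> X" by auto
    ultimately show ?thesis using 1 2 basis_card[OF M B] by simp
  qed
  have bound: "card (B \<inter> (E - X)) \<le> ?r" if B: "basis indep B" for B
  proof -
    have "indep B" using B unfolding basis_def by simp
    then have "indep (B \<inter> (E - X))" using mat_props(4)[OF M, of B "B \<inter> (E - X)"] by simp
    thus ?thesis using rk_ge[OF M, of "B \<inter> (E - X)" "E - X"] by simp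
  qed
  obtain I0 where I0: "I0 \<subseteq> E - X" "indep I0" "card I0 = ?r" by (rule rk_attained[OF M])
  obtain B0 where B0: "basis indep B0" "I0 \<subseteq> B0" by (rule extend_basis[OF M I0(2)])
  have f0: "finite (B0 \<inter> (E - X))" using finE by simp
  have s0: "I0 \<subseteq> B0 \<inter> (E - X)" using B0(2) I0(1) by auto
  have "card I0 \<le> card (B0 \<inter> (E - X))" using card_mono[OF f0 s0] .
  then have B0r: "card (B0 \<inter> (E-X)) = ?r" using bound[OF B0(1)] I0 by auto
  let ?D = "{I. I \<subseteq> X \<and> dual_indep E indep I}"
  have "?D \<subseteq> Pow X" by auto
  then have finD: "finite ?D" using finX finite_subset by blast
  have memD: "X - B0 \<in> ?D" unfolding dual_indep_def using B0 X by auto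
  have ge: "card (X - B0) \<le> rk (dual_indep E indep) X" unfolding rk_def
    using finD memD by (intro Max_ge) auto
  have le: "rk (dual_indep E indep) X \<le> card (X - B0)" unfolding rk_def
  proof (rule Max.boundedI)
    show "finite (card ` ?D)" using finD by auto
    show "card ` ?D \<noteq> {}" using memD by auto
    fix a assume "a \<in> card ` ?D"
    then obtain I B where IB: "I \<subseteq> X" "basis indep B" "I \<subseteq> E - B" "a = card I"
      unfolding dual_indep_def by auto
    then have "a \<le> card (X - B)" using finX by (auto intro: card_mono)
    then have "int a \<le> int (card X) - int ?d + int (card (B \<inter> (E - X)))" using key[OF IB(2)] by linarith
    also have "\<dots> \<le> int (card (X - B0))" using key[OF B0(1)] B0r bound[OF IB(2)] by linarith
    finally show "a \<le> card (X - B0)" by simp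
  qed
  show ?thesis using ge le key[OF B0(1)] B0r by simp
qed

lemma rk_empty: assumes "matroid E indep" shows "rk indep {} = 0"
  using rk_attained[OF assms, of "{}"] by (metis card.empty subset_empty)

lemma reidx:
  assumes "P \<subseteq> Pow E"
  shows "(\<Sum>V\<in>(\<lambda>S. E - S) ` P. f V) = (\<Sum>T\<in>P. f (E - T))"
proof -
  have "inj_on (\<lambda>S. E - S) P" using assms by (intro inj_onI) blast
  thus ?thesis by (simp add: sum.reindex)
qed

lemma filt_img: "{V \<in> (\<lambda>S. E - S) ` P. Q V} = (\<lambda>S. E - S) ` {T \<in> P. Q (E - T)}"
  by auto

lemma a_sum:
  assumes "finite P" "T \<in> P" "finite T"
  shows "cnull indep T = (\<Sum>U\<in>{U\<in>P. U \<subseteq> T}. acoef indep P U)"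
proof -
  have "{U\<in>P. U \<subseteq> T} = insert T {U\<in>P. U \<subset> T}" using assms by auto
  moreover have "acoef indep P T = cnull indep T - (\<Sum>U\<in>{U\<in>P. U \<subset> T}. acoef indep P U)"
    using assms(3) by (subst acoef.simps) simp
  ultimately show ?thesis using assms(1) by simp
qed

lemma compl_sub: "A \<subseteq> E \<Longrightarrow> B \<subseteq> E \<Longrightarrow> (E - A \<subseteq> E - B) = (B \<subseteq> A)" by blast
lemma compl_psub: "A \<subseteq> E \<Longrightarrow> B \<subseteq> E \<Longrightarrow> (E - A \<subset> E - B) = (B \<subset> A)"
  by (auto simp: compl_sub psubset_eq)

lemma nu_zero:
  assumes "T \<subseteq> E" "S \<subseteq> E" "\<not> T \<subseteq> S"
  shows "mobius P' (E - S) (E - T) = 0"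
proof -
  have "E - S \<noteq> E - T" using assms by blast
  moreover have "\<not> (E - S \<subset> E - T)" using assms by blast
  ultimately show ?thesis by (subst mobius.simps) simp
qed

lemma nu_rec:
  assumes P: "P \<subseteq> Pow E" "finite E" and U: "U \<in> P" and S: "S \<in> P" and US: "U \<subseteq> S"
  shows "(\<Sum>T\<in>{T\<in>P. U \<subseteq> T \<and> T \<subseteq> S}. mobius ((\<lambda>S. E - S) ` P) (E - S) (E - T))
          = (if U = S then 1 else 0)"
proof (cases "U = S")
  case True
  then have "{T\<in>P. U \<subseteq> T \<and> T \<subseteq> S} = {S}" using S by auto
  then show ?thesis using True by (simp add: mobius.simps)
next
  case False
  let ?P' = "(\<lambda>S. E - S) ` P"
  have fin: "finite (E - U)" using P by auto
  have ne: "E - S \<noteq> E - U" using False U S P by blast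
  have lt: "E - S \<subset> E - U" using False US U S P by blast
  have "mobius ?P' (E - S) (E - U)
      = - (\<Sum>V\<in>{V\<in>?P'. E - S \<subseteq> V \<and> V \<subset> E - U}. mobius ?P' (E - S) V)"
    using ne lt fin by (subst mobius.simps) simp
  also have "{V\<in>?P'. E - S \<subseteq> V \<and> V \<subset> E - U}
      = (\<lambda>S. E - S) ` {T\<in>P. E - S \<subseteq> E - T \<and> E - T \<subset> E - U}" by (rule filt_img)
  also have "{T\<in>P. E - S \<subseteq> E - T \<and> E - T \<subset> E - U} = {T\<in>P. U \<subset> T \<and> T \<subseteq> S}"
  proof (rule Collect_cong)
    fix T
    show "(T \<in> P \<and> E - S \<subseteq> E - T \<and> E - T \<subset> E - U) = (T \<in> P \<and> U \<subset> T \<and> T \<subseteq> S)"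
    proof (cases "T \<in> P")
      case True
      then have "T \<subseteq> E" "S \<subseteq> E" "U \<subseteq> E" using P U S by auto
      then show ?thesis using True by (auto simp add: compl_sub compl_psub)
    qed simp
  qed
  finally have rec: "mobius ?P' (E - S) (E - U)
      = - (\<Sum>T\<in>{T\<in>P. U \<subset> T \<and> T \<subseteq> S}. mobius ?P' (E - S) (E - T))"
    using P(1) by (subst (asm) reidx) auto
  have "{T\<in>P. U \<subseteq> T \<and> T \<subseteq> S} = insert U {T\<in>P. U \<subset> T \<and> T \<subseteq> S}" using U US by auto
  moreover have "finite P" using P finite_subset by (metis finite_Pow_iff)
  ultimately show ?thesis using rec False by simp
qed

theorem proposition6p2:
  fixes E :: "'a set" and indep :: "'a set \<Rightarrow> bool"
    and \<SS> :: "'a set set" and n k :: nat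
  assumes "matroid E indep"
    and "card E = n"
    and "rk indep E = k"
    and "\<SS> \<subseteq> Pow E"
  shows "ec E indep \<SS> = ec E (dual_indep E indep) ((\<lambda>S. E - S) ` \<SS>)
         \<and> (\<forall>S\<in>\<SS>. acoef indep \<SS> S
                  = bcoef E (dual_indep E indep) ((\<lambda>S. E - S) ` \<SS>) (E - S))"
proof -
  note M = assms(1)
  let ?P = "\<SS>"
  let ?P' = "(\<lambda>S. E - S) ` \<SS>"
  let ?D = "dual_indep E indep"
  let ?d = "rk indep E"
  have PE: "?P \<subseteq> Pow E" using assms(4) .
  have finE: "finite E" using mat_props(1)[OF M] .
  have finP: "finite ?P" using PE finE by (metis finite_Pow_iff finite_subset)
  have finP': "finite ?P'" using finP by simp
  have sub: "T \<subseteq> E" if "T \<in> ?P" for T using that PE by auto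
  have finT: "finite T" if "T \<in> ?P" for T using sub[OF that] finE finite_subset by blast
  have dE: "int (rk ?D E) = int (card E) - int ?d"
    using dual_rk[OF M, of E] rk_empty[OF M] by simp
  have dr: "int (rk ?D (E - T)) = int (card (E - T)) - int ?d + int (rk indep T)" if "T \<subseteq> E" for T
  proof -
    have "E - (E - T) = T" using that by auto
    thus ?thesis using dual_rk[OF M, of "E - T"] by simp
  qed
  have cardc: "int (card E) = int (card T) + int (card (E - T))" if "T \<subseteq> E" for T
  proof -
    have "card E = card (E \<inter> T) + card (E - T)" using finE by (rule card_Int_Diff)
    moreover have "E \<inter> T = T" using that by auto
    ultimately show ?thesis by simp
  qed
  have cT: "int (rk ?D E) - int (rk ?D (E - T)) = cnull indep T" if "T \<subseteq> E" for T
    using dE dr[OF that] cardc[OF that] unfolding cnull_def by simp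
  have gT: "cnull ?D (E - T) = int ?d - int (rk indep T)" if "T \<subseteq> E" for T
    using dr[OF that] unfolding cnull_def by simp

  have part2: "acoef indep ?P S = bcoef E ?D ?P' (E - S)" if S: "S \<in> ?P" for S
  proof -
    define \<nu> where "\<nu> T = mobius ?P' (E - S) (E - T)" for T
    have inner: "(\<Sum>T\<in>{T\<in>?P. U \<subseteq> T}. \<nu> T) = (if U = S then 1 else 0)" if U: "U \<in> ?P" for U
    proof (cases "U \<subseteq> S")
      case True
      have "{T\<in>?P. U \<subseteq> T \<and> T \<subseteq> S} = {T\<in>{T\<in>?P. U \<subseteq> T}. T \<subseteq> S}" by auto
      then have "(\<Sum>T\<in>{T\<in>?P. U \<subseteq> T \<and> T \<subseteq> S}. \<nu> T)
          = (\<Sum>T\<in>{T\<in>?P. U \<subseteq> T}. if T \<subseteq> S then \<nu> T else 0)"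
        using finP by (simp add: sum.inter_filter) (rule sum.cong; auto)
      also have "\<dots> = (\<Sum>T\<in>{T\<in>?P. U \<subseteq> T}. \<nu> T)"
      proof (rule sum.cong[OF refl])
        fix T assume "T \<in> {T\<in>?P. U \<subseteq> T}"
        then have TE: "T \<subseteq> E" using sub by auto
        show "(if T \<subseteq> S then \<nu> T else 0) = \<nu> T"
          using nu_zero[OF TE sub[OF S], of ?P'] unfolding \<nu>_def by auto
      qed
      finally show ?thesis using nu_rec[OF PE finE U S True] unfolding \<nu>_def by simp
    next
      case False
      have "(\<Sum>T\<in>{T\<in>?P. U \<subseteq> T}. \<nu> T) = 0"
      proof (rule sum.neutral, intro ballI)
        fix T assume "T \<in> {T\<in>?P. U \<subseteq> T}"
        then have "T \<in> ?P" "\<not> T \<subseteq> S" using False by auto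
        then show "\<nu> T = 0" unfolding \<nu>_def using nu_zero sub S by blast
      qed
      then show ?thesis using False by auto
    qed
    have "bcoef E ?D ?P' (E - S) = (\<Sum>T\<in>?P. (int (rk ?D E) - int (rk ?D (E - T))) * \<nu> T)"
      unfolding bcoef_def \<nu>_def using PE by (rule reidx)
    also have "\<dots> = (\<Sum>T\<in>?P. cnull indep T * \<nu> T)"
      by (rule sum.cong) (auto simp: cT sub)
    also have "\<dots> = (\<Sum>T\<in>?P. \<Sum>U\<in>{U\<in>?P. U \<subseteq> T}. acoef indep ?P U * \<nu> T)"
      by (rule sum.cong) (auto simp: a_sum[OF finP _ finT] sum_distrib_right)
    also have "\<dots> = (\<Sum>U\<in>?P. \<Sum>T\<in>{T\<in>?P. U \<subseteq> T}. acoef indep ?P U * \<nu> T)"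
      by (rule sum.swap_restrict[OF finP finP])
    also have "\<dots> = (\<Sum>U\<in>?P. acoef indep ?P U * (if U = S then 1 else 0))"
      by (rule sum.cong) (auto simp: inner sum_distrib_left[symmetric])
    also have "\<dots> = acoef indep ?P S" using S finP by (simp add: if_distrib cong: if_cong)
    finally show ?thesis by simp
  qed

  define \<alpha> where "\<alpha> T = acoef ?D ?P' (E - T)" for T
  have gsum: "int ?d - int (rk indep T) = (\<Sum>U\<in>{U\<in>?P. T \<subseteq> U}. \<alpha> U)" if T: "T \<in> ?P" for T
  proof -
    have "E - T \<in> ?P'" using T by auto
    then have "cnull ?D (E - T) = (\<Sum>V\<in>{V\<in>?P'. V \<subseteq> E - T}. acoef ?D ?P' V)"
      using finP' finE by (intro a_sum) auto
    also have "{V\<in>?P'. V \<subseteq> E - T} = (\<lambda>S. E - S) ` {U\<in>?P. E - U \<subseteq> E - T}" by (rule filt_img)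
    also have "{U\<in>?P. E - U \<subseteq> E - T} = {U\<in>?P. T \<subseteq> U}"
    proof (rule Collect_cong)
      fix U show "(U \<in> ?P \<and> E - U \<subseteq> E - T) = (U \<in> ?P \<and> T \<subseteq> U)"
        using sub[of U] sub[OF T] compl_sub[of U E T] by auto
    qed
    finally have "cnull ?D (E - T) = (\<Sum>U\<in>{U\<in>?P. T \<subseteq> U}. \<alpha> U)"
      unfolding \<alpha>_def by (subst (asm) reidx[where E=E]) (use PE in auto)
    thus ?thesis using gT[OF sub[OF T]] by simp
  qed
  have "ec E indep ?P = (\<Sum>S\<in>?P. (\<Sum>T\<in>{T\<in>?P. S \<subseteq> T}. \<alpha> T) * acoef indep ?P S)"
    unfolding ec_def by (rule sum.cong) (auto simp: gsum)
  also have "\<dots> = (\<Sum>S\<in>?P. \<Sum>T\<in>{T\<in>?P. S \<subseteq> T}. \<alpha> T * acoef indep ?P S)"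
    by (simp add: sum_distrib_right)
  also have "\<dots> = (\<Sum>T\<in>?P. \<Sum>S\<in>{S\<in>?P. S \<subseteq> T}. \<alpha> T * acoef indep ?P S)"
    by (rule sum.swap_restrict[OF finP finP])
  also have "\<dots> = (\<Sum>T\<in>?P. \<alpha> T * cnull indep T)"
    by (rule sum.cong) (auto simp: a_sum[OF finP _ finT] sum_distrib_left)
  also have "\<dots> = (\<Sum>T\<in>?P. (int (rk ?D E) - int (rk ?D (E - T))) * \<alpha> T)"
    by (rule sum.cong) (auto simp: cT sub)
  also have "\<dots> = ec E ?D ?P'"
    unfolding ec_def \<alpha>_def using PE by (rule reidx[symmetric])
  finally show ?thesis using part2 by blast
qed

end
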